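(* In the standing setting, let $(A,B,R,\sigma)$ be a context with associated Boolean context $(A,B,R^B)$. For all $X\subseteq B$ and $Y\subseteq A$: $(\chi_X,\chi_Y)\in\mathcal F_N$ if and only if $(X,Y)\in\mathcal C_N$.
   Context: Adjoint triple: for posets $(P_1,\le_1),(P_2,\le_2),(P_3,\le_3)$, maps $\&\colon P_1\times P_2\to P_3$, $\swarrow\colon P_3\times P_2\to P_1$, $\nwarrow\colon P_3\times P_1\to P_2$ with $x\le_1 z\swarrow y \iff x\,\&\,y\le_3 z \iff y\le_2 z\nwarrow x$ for all $x,y,z$. For lower-bounded posets, $\&$ has zero-divisors if there are $x\ne\bot_1$, $y\neq\bot_2$ with $x\,\&\,y=\bot_3$. Standing setting: $(L_1,\preceq_1,\bot_1,\top_1)$ and $(L_2,\preceq_2,\bot_2,\top_2)$ are complete lattices and $(P,\le,\bot,\top)$ is a bounded poset. A multi-adjoint frame consists of adjoint triples $(\&_i,\swarrow^i,\nwarrow_i)$, $i=1,\dots,n$, with respect to $L_1,L_2,P$; a property-oriented frame consists of adjoint triples $(\&^p_j,\swarrow_p^j,\nwarrow^p_j)$, $j=1,\dots,m$, with respect to $P,L_2,L_1$; an object-oriented frame consists of adjoint triples $(\&^o_k,\swarrow_o^k,\nwarrow^o_k)$, $k=1,\dots,s$, with respect to $L_1,P,L_2$. All conjunctors $\&_i,\&^p_j,\&^o_k$ have no zero-divisors. A context $(A,B,R,\sigma)$ consists of non-empty sets $A,B$, $R\colon A\times B\to P$, and maps $\sigma,\sigma_p,\sigma_o$ from $A\times B$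 to the index sets of the three frames. Fuzzy necessity operators: $g^{\uparrow_N}(a)=\inf\{g(b)\swarrow_o^{\sigma_o(a,b)}R(a,b)\mid b\in B\}$ for $g\in L_2^B$, and $f^{\downarrow^N}(b)=\inf\{f(a)\nwarrow^p_{\sigma_p(a,b)}R(a,b)\mid a\in A\}$ for $f\in L_1^A$. Associated Boolean context $(A,B,R^B)$: $R^B(a,b)=1$ if $R(a,b)\ne\bot$ and $0$ otherwise. Crisp necessity operators: for $X\subseteq B$, $X^{\uparrow_N}=\{a\in A\mid \forall b\in B,\ R^B(a,b)=1\Rightarrow b\in X\}$; for $Y\subseteq A$, $Y^{\downarrow^N}=\{b\in B\mid\forall a\in A,\ R^B(a,b)=1\Rightarrow a\in Y\}$. For $X\subseteq B$, $\chi_X\in L_2^B$ takes value $\top_2$ on $X$ and $\bot_2$ elsewhere; for $Y\subseteq A$, $\chi_Y\in L_1^A$ takes value $\top_1$ on $Y$ and $\bot_1$ elsewhere. $\mathcal C_N=\{(X,Y)\mid X\subseteq B,\ Y\subseteq A,\ X^{\uparrow_N}=Y,\ Y^{\downarrow^N}=X\}$ (crisp operators) and $\mathcal F_N=\{(g,f)\mid g\in L_2^B,\ f\in L_1^A,\ g^{\uparrow_N}=f,\ f^{\downarrow^N}=g\}$ (fuzzy operators). *)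

theory Defs
  imports Main
begin

definition adjoint_triple ::
  "('x::order \<Rightarrow> 'y::order \<Rightarrow> 'z::order) \<Rightarrow> ('z \<Rightarrow> 'y \<Rightarrow> 'x) \<Rightarrow> ('z \<Rightarrow> 'x \<Rightarrow> 'y) \<Rightarrow> bool" where
  "adjoint_triple cnj sw nw \<longleftrightarrow>
     (\<forall>x y z. (x \<le> sw z y \<longleftrightarrow> cnj x y \<le> z) \<and> (cnj x y \<le> z \<longleftrightarrow> y \<le> nw z x))"

definition no_zero_divisors ::
  "('x::order_bot \<Rightarrow> 'y::order_bot \<Rightarrow> 'z::order_bot) \<Rightarrow> bool" where
  "no_zero_divisors cnj \<longleftrightarrow> \<not> (\<exists>x y. x \<noteq> bot \<and> y \<noteq> bot \<and> cnj x y = bot)"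

text \<open>Fuzzy necessity operators. g in L2^B, f in L1^A; A, B are the (nonempty) types.\<close>
definition up_N ::
  "(nat \<Rightarrow> 'b::complete_lattice \<Rightarrow> 'c \<Rightarrow> 'a::complete_lattice) \<Rightarrow> ('o \<Rightarrow> 'p \<Rightarrow> nat)
    \<Rightarrow> ('o \<Rightarrow> 'p \<Rightarrow> 'c) \<Rightarrow> ('p \<Rightarrow> 'b) \<Rightarrow> ('o \<Rightarrow> 'a)" where
  "up_N sw_o sigma_o R g = (\<lambda>a. INF b. sw_o (sigma_o a b) (g b) (R a b))"

definition down_N ::
  "(nat \<Rightarrow> 'a::complete_lattice \<Rightarrow> 'c \<Rightarrow> 'b::complete_lattice) \<Rightarrow> ('o \<Rightarrow> 'p \<Rightarrow> nat)
    \<Rightarrow> ('o \<Rightarrow> 'p \<Rightarrow> 'c) \<Rightarrow> ('o \<Rightarrow> 'a) \<Rightarrow> ('p \<Rightarrow> 'b)" where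
  "down_N nw_p sigma_p R f = (\<lambda>b. INF a. nw_p (sigma_p a b) (f a) (R a b))"

definition F_N ::
  "(nat \<Rightarrow> 'b::complete_lattice \<Rightarrow> 'c \<Rightarrow> 'a::complete_lattice) \<Rightarrow> ('o \<Rightarrow> 'p \<Rightarrow> nat)
   \<Rightarrow> (nat \<Rightarrow> 'a \<Rightarrow> 'c \<Rightarrow> 'b) \<Rightarrow> ('o \<Rightarrow> 'p \<Rightarrow> nat) \<Rightarrow> ('o \<Rightarrow> 'p \<Rightarrow> 'c)
   \<Rightarrow> (('p \<Rightarrow> 'b) \<times> ('o \<Rightarrow> 'a)) set" where
  "F_N sw_o sigma_o nw_p sigma_p R =
     {(g, f). up_N sw_o sigma_o R g = f \<and> down_N nw_p sigma_p R f = g}"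

text \<open>Associated Boolean context: R^B a b = 1 iff R a b \<noteq> bot (1 encoded as True).\<close>
definition boolean_context :: "('o \<Rightarrow> 'p \<Rightarrow> 'c::bot) \<Rightarrow> 'o \<Rightarrow> 'p \<Rightarrow> bool" where
  "boolean_context R = (\<lambda>a b. R a b \<noteq> bot)"

definition crisp_up :: "('o \<Rightarrow> 'p \<Rightarrow> bool) \<Rightarrow> 'p set \<Rightarrow> 'o set" where
  "crisp_up RB X = {a. \<forall>b. RB a b \<longrightarrow> b \<in> X}"

definition crisp_down :: "('o \<Rightarrow> 'p \<Rightarrow> bool) \<Rightarrow> 'o set \<Rightarrow> 'p set" where
  "crisp_down RB Y = {b. \<forall>a. RB a b \<longrightarrow> a \<in> Y}"

definition C_N :: "('o \<Rightarrow> 'p \<Rightarrow> bool) \<Rightarrow> ('p set \<times> 'o set) set" where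
  "C_N RB = {(X, Y). crisp_up RB X = Y \<and> crisp_down RB Y = X}"

definition chi :: "'x set \<Rightarrow> 'x \<Rightarrow> 'l::{bot,top}" where
  "chi S = (\<lambda>x. if x \<in> S then top else bot)"

end

theory Submission
  imports Defs
begin

lemma at_sw_top: "adjoint_triple cnj sw nw \<Longrightarrow> sw (top::'a::order_top) r = (top::'b::order_top)"
proof -
  assume at: "adjoint_triple cnj sw nw"
  have "cnj top r \<le> top" by simp
  hence "top \<le> sw top r" using at unfolding adjoint_triple_def by blast
  thus ?thesis by (simp add: top_unique)
qed

lemma at_sw_bot: "adjoint_triple cnj sw nw \<Longrightarrow> no_zero_divisors cnj \<Longrightarrow> r \<noteq> bot
   \<Longrightarrow> sw (bot::'c::order_bot) (r::'b::order_bot) = (bot::'a::order_bot)"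
proof -
  assume at: "adjoint_triple cnj sw nw" and nz: "no_zero_divisors cnj" and r: "r \<noteq> bot"
  have "cnj (sw bot r) r \<le> bot" using at unfolding adjoint_triple_def by blast
  hence "cnj (sw bot r) r = bot" by (simp add: bot_unique)
  thus ?thesis using nz r unfolding no_zero_divisors_def by blast
qed

lemma at_sw_botbot: "adjoint_triple cnj sw nw
   \<Longrightarrow> sw (bot::'c::order_bot) (bot::'b::order_bot) = (top::'a::{order_bot,order_top})"
proof -
  assume at: "adjoint_triple cnj sw nw"
  have "cnj top bot \<le> bot" using at unfolding adjoint_triple_def by simp
  hence "top \<le> sw bot (bot::'b)" using at unfolding adjoint_triple_def by blast
  thus ?thesis by (simp add: top_unique)
qed

lemma at_nw_top: "adjoint_triple cnj sw nw \<Longrightarrow> nw (top::'a::order_top) r = (top::'b::order_top)"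
proof -
  assume at: "adjoint_triple cnj sw nw"
  have "cnj r top \<le> top" by simp
  hence "top \<le> nw top r" using at unfolding adjoint_triple_def by blast
  thus ?thesis by (simp add: top_unique)
qed

lemma at_nw_bot: "adjoint_triple cnj sw nw \<Longrightarrow> no_zero_divisors cnj \<Longrightarrow> r \<noteq> bot
   \<Longrightarrow> nw (bot::'c::order_bot) (r::'a::order_bot) = (bot::'b::order_bot)"
proof -
  assume at: "adjoint_triple cnj sw nw" and nz: "no_zero_divisors cnj" and r: "r \<noteq> bot"
  have "cnj r (nw bot r) \<le> bot" using at unfolding adjoint_triple_def by blast
  hence "cnj r (nw bot r) = bot" by (simp add: bot_unique)
  thus ?thesis using nz r unfolding no_zero_divisors_def by blast
qed

lemma at_nw_botbot: "adjoint_triple cnj sw nw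
   \<Longrightarrow> nw (bot::'c::order_bot) (bot::'a::order_bot) = (top::'b::{order_bot,order_top})"
proof -
  assume at: "adjoint_triple cnj sw nw"
  have H: "cnj (bot::'a) (top::'b) \<le> (bot::'c) \<longleftrightarrow> top \<le> nw bot (bot::'a)"
    using at unfolding adjoint_triple_def by blast
  have "(bot::'a) \<le> sw (bot::'c) (top::'b)" by simp
  hence "cnj (bot::'a) (top::'b) \<le> (bot::'c)" using at unfolding adjoint_triple_def by blast
  hence "top \<le> nw bot (bot::'a)" using H by blast
  thus ?thesis by (simp add: top_unique)
qed

lemma chi_inj: "(bot::'l::{order_bot,order_top}) \<noteq> top \<Longrightarrow> (chi S = (chi T :: 'x \<Rightarrow> 'l)) = (S = T)"
proof
  assume nt: "(bot::'l) \<noteq> top" and eq: "chi S = (chi T :: 'x \<Rightarrow> 'l)"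
  show "S = T"
  proof (rule set_eqI)
    fix x
    have "(chi S x :: 'l) = chi T x" using eq by simp
    thus "(x \<in> S) = (x \<in> T)" using nt unfolding chi_def
      by (cases "x \<in> S"; cases "x \<in> T") (simp_all add: eq_commute)
  qed
qed simp

theorem mainTheorem4:
  fixes cnj :: "nat \<Rightarrow> 'a::complete_lattice \<Rightarrow> 'b::complete_lattice \<Rightarrow> 'c::{order_bot,order_top}"
    and sw :: "nat \<Rightarrow> 'c \<Rightarrow> 'b \<Rightarrow> 'a" and nw :: "nat \<Rightarrow> 'c \<Rightarrow> 'a \<Rightarrow> 'b"
    and cnj_p :: "nat \<Rightarrow> 'c \<Rightarrow> 'b \<Rightarrow> 'a"
    and sw_p :: "nat \<Rightarrow> 'a \<Rightarrow> 'b \<Rightarrow> 'c" and nw_p :: "nat \<Rightarrow> 'a \<Rightarrow> 'c \<Rightarrow> 'b"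
    and cnj_o :: "nat \<Rightarrow> 'a \<Rightarrow> 'c \<Rightarrow> 'b"
    and sw_o :: "nat \<Rightarrow> 'b \<Rightarrow> 'c \<Rightarrow> 'a" and nw_o :: "nat \<Rightarrow> 'b \<Rightarrow> 'a \<Rightarrow> 'c"
    and n m s :: nat
    and R :: "'o \<Rightarrow> 'p \<Rightarrow> 'c"
    and sigma sigma_p sigma_o :: "'o \<Rightarrow> 'p \<Rightarrow> nat"
    and X :: "'p set" and Y :: "'o set"
  assumes nontriv1: "(bot :: 'a) \<noteq> top"
    and nontriv2: "(bot :: 'b) \<noteq> top"
    and multi: "\<forall>i\<in>{1..n}. adjoint_triple (cnj i) (sw i) (nw i) \<and> no_zero_divisors (cnj i)"
    and propf: "\<forall>j\<in>{1..m}. adjoint_triple (cnj_p j) (sw_p j) (nw_p j) \<and> no_zero_divisors (cnj_p j)"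
    and obj: "\<forall>k\<in>{1..s}. adjoint_triple (cnj_o k) (sw_o k) (nw_o k) \<and> no_zero_divisors (cnj_o k)"
    and sigma_rng: "\<forall>a b. sigma a b \<in> {1..n}"
    and sigma_p_rng: "\<forall>a b. sigma_p a b \<in> {1..m}"
    and sigma_o_rng: "\<forall>a b. sigma_o a b \<in> {1..s}"
  shows "(chi X, chi Y) \<in> F_N sw_o sigma_o nw_p sigma_p R
     \<longleftrightarrow> (X, Y) \<in> C_N (boolean_context R)"
  proof -
  have upE: "up_N sw_o sigma_o R (chi X) = chi (crisp_up (boolean_context R) X)"
  proof (rule ext)
    fix a
    show "up_N sw_o sigma_o R (chi X) a = chi (crisp_up (boolean_context R) X) a"
    proof (cases "a \<in> crisp_up (boolean_context R) X")
      case True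
      have "\<And>b. sw_o (sigma_o a b) (chi X b) (R a b) = top"
      proof -
        fix b
        have at: "adjoint_triple (cnj_o (sigma_o a b)) (sw_o (sigma_o a b)) (nw_o (sigma_o a b))"
          using obj sigma_o_rng by blast
        show "sw_o (sigma_o a b) (chi X b) (R a b) = top"
        proof (cases "b \<in> X")
          case True thus ?thesis using at_sw_top[OF at] by (simp add: chi_def)
        next
          case False
          hence "R a b = bot" using \<open>a \<in> crisp_up (boolean_context R) X\<close>
            by (auto simp: crisp_up_def boolean_context_def)
          thus ?thesis using False at_sw_botbot[OF at] by (simp add: chi_def)
        qed
      qed
      thus ?thesis using True by (simp add: up_N_def chi_def)
    next
      case False
      then obtain b where b: "R a b \<noteq> bot" "b \<notin> X"
        by (auto simp: crisp_up_def boolean_context_def)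
      have at: "adjoint_triple (cnj_o (sigma_o a b)) (sw_o (sigma_o a b)) (nw_o (sigma_o a b))"
          "no_zero_divisors (cnj_o (sigma_o a b))"
          using obj sigma_o_rng by blast+
      have "sw_o (sigma_o a b) (chi X b) (R a b) = bot"
        using b at_sw_bot[OF at b(1)] by (simp add: chi_def)
      moreover have "(INF b'. sw_o (sigma_o a b') (chi X b') (R a b')) \<le> sw_o (sigma_o a b) (chi X b) (R a b)"
        by (rule INF_lower) simp
      ultimately have "up_N sw_o sigma_o R (chi X) a \<le> bot"
        unfolding up_N_def by simp
      thus ?thesis using False by (simp add: chi_def bot_unique)
    qed
  qed
  have downE: "down_N nw_p sigma_p R (chi Y) = chi (crisp_down (boolean_context R) Y)"
  proof (rule ext)
    fix b
    show "down_N nw_p sigma_p R (chi Y) b = chi (crisp_down (boolean_context R) Y) b"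
    proof (cases "b \<in> crisp_down (boolean_context R) Y")
      case True
      have "\<And>a. nw_p (sigma_p a b) (chi Y a) (R a b) = top"
      proof -
        fix a
        have at: "adjoint_triple (cnj_p (sigma_p a b)) (sw_p (sigma_p a b)) (nw_p (sigma_p a b))"
          using propf sigma_p_rng by blast
        show "nw_p (sigma_p a b) (chi Y a) (R a b) = top"
        proof (cases "a \<in> Y")
          case True thus ?thesis using at_nw_top[OF at] by (simp add: chi_def)
        next
          case False
          hence "R a b = bot" using \<open>b \<in> crisp_down (boolean_context R) Y\<close>
            by (auto simp: crisp_down_def boolean_context_def)
          thus ?thesis using False at_nw_botbot[OF at] by (simp add: chi_def)
        qed
      qed
      thus ?thesis using True by (simp add: down_N_def chi_def)
    next
      case False
      then obtain a where a: "R a b \<noteq> bot" "a \<notin> Y"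
        by (auto simp: crisp_down_def boolean_context_def)
      have at: "adjoint_triple (cnj_p (sigma_p a b)) (sw_p (sigma_p a b)) (nw_p (sigma_p a b))"
          "no_zero_divisors (cnj_p (sigma_p a b))"
          using propf sigma_p_rng by blast+
      have "nw_p (sigma_p a b) (chi Y a) (R a b) = bot"
        using a at_nw_bot[OF at a(1)] by (simp add: chi_def)
      moreover have "(INF a'. nw_p (sigma_p a' b) (chi Y a') (R a' b)) \<le> nw_p (sigma_p a b) (chi Y a) (R a b)"
        by (rule INF_lower) simp
      ultimately have "down_N nw_p sigma_p R (chi Y) b \<le> bot"
        unfolding down_N_def by simp
      thus ?thesis using False by (simp add: chi_def bot_unique)
    qed
  qed
  have e1: "(chi (crisp_up (boolean_context R) X) = (chi Y :: 'o \<Rightarrow> 'a)) = (crisp_up (boolean_context R) X = Y)"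
    by (rule chi_inj[OF nontriv1])
  have e2: "(chi (crisp_down (boolean_context R) Y) = (chi X :: 'p \<Rightarrow> 'b)) = (crisp_down (boolean_context R) Y = X)"
    by (rule chi_inj[OF nontriv2])
  show ?thesis
    unfolding F_N_def C_N_def using upE downE e1 e2
    by simp
qed


end
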